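(* Let $\mathsf g_1$ and $\mathsf g_2$ be two $\mathrm{CAT}(0)$ metrics on a surface lying in the same conformal class. Then the averaged metric $\mathsf g=\tfrac12(\mathsf g_1+\mathsf g_2)$ is also $\mathrm{CAT}(0)$.
   Context: A $\mathrm{CAT}(0)$ metric on a surface means a metric which is smooth Riemannian with nonpositive Gaussian curvature away from finitely many singular points, near each of which, in a local conformal coordinate $z$, the metric has the form $e^{h(z)}|z|^{2\beta}|dz|^2$ with $\beta\ge 0$ (a conical point of total angle $2\pi(1+\beta)\ge 2\pi$). *)

theory Defs
  imports "HOL-Analysis.Analysis"
begin

definition pdir :: "complex \<Rightarrow> (complex \<Rightarrow> real) \<Rightarrow> complex \<Rightarrow> real" where
  "pdir v f z = (THE d. ((\<lambda>t. f (z + of_real t * v)) has_real_derivative d) (at 0))"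

fun iter_pd :: "complex list \<Rightarrow> (complex \<Rightarrow> real) \<Rightarrow> complex \<Rightarrow> real" where
  "iter_pd [] f = f"
| "iter_pd (v # vs) f = pdir v (iter_pd vs f)"

text \<open>C-infinity: all iterated partial derivatives (with respect to x = Re z and y = Im z)
  exist and are continuous on S.\<close>
definition smooth_on :: "complex set \<Rightarrow> (complex \<Rightarrow> real) \<Rightarrow> bool" where
  "smooth_on S f \<longleftrightarrow>
     (\<forall>vs. set vs \<subseteq> {1, \<i>} \<longrightarrow>
        continuous_on S (iter_pd vs f) \<and>
        (\<forall>v\<in>{1, \<i>}. \<forall>z\<in>S. (\<lambda>t. iter_pd vs f (z + of_real t * v)) differentiable (at 0)))"

definition laplacian :: "(complex \<Rightarrow> real) \<Rightarrow> complex \<Rightarrow> real" where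
  "laplacian u z = pdir 1 (pdir 1 u) z + pdir \<i> (pdir \<i> u) z"

text \<open>Gaussian curvature of the conformal metric rho |dz|^2: K = - Delta (log rho) / (2 rho).\<close>
definition gauss_curv :: "(complex \<Rightarrow> real) \<Rightarrow> complex \<Rightarrow> real" where
  "gauss_curv \<rho> z = - laplacian (\<lambda>w. ln (\<rho> w)) z / (2 * \<rho> z)"

text \<open>A CAT(0) metric rho |dz|^2 on the open set U of a conformal chart: smooth Riemannian
  with nonpositive Gaussian curvature off a finite set S of singular points, and near each
  singular point p of the form exp(h z) |z - p|^(2 beta) |dz|^2 with beta >= 0.\<close>
definition cat0_conformal_metric :: "complex set \<Rightarrow> (complex \<Rightarrow> real) \<Rightarrow> bool" where
  "cat0_conformal_metric U \<rho> \<longleftrightarrow>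
     (\<exists>S. finite S \<and> S \<subseteq> U \<and>
        (\<forall>z\<in>U - S. \<rho> z > 0) \<and>
        smooth_on (U - S) \<rho> \<and>
        (\<forall>z\<in>U - S. gauss_curv \<rho> z \<le> 0) \<and>
        (\<forall>p\<in>S. \<exists>\<beta>::real. \<beta> \<ge> 0 \<and> (\<exists>r>0. \<exists>h::complex \<Rightarrow> real.
            ball p r \<subseteq> U \<and> continuous_on (ball p r) h \<and>
            (\<forall>z\<in>ball p r - {p}. \<rho> z = exp (h z) * cmod (z - p) powr (2 * \<beta>)))))"

end

theory Submission
  imports Defs
begin

lemma pdir_eq:
  assumes "((\<lambda>t. f (z + of_real t * v)) has_real_derivative d) (at 0)"
  shows "pdir v f z = d"
  unfolding pdir_def
  using assms by (intro the_equality) (auto intro: DERIV_unique)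

lemma pdir_has:
  assumes "(\<lambda>t. f (z + of_real t * v)) differentiable (at 0)"
  shows "((\<lambda>t. f (z + of_real t * v)) has_real_derivative pdir v f z) (at 0)"
proof -
  have "((\<lambda>t. f (z + of_real t * v)) has_real_derivative deriv (\<lambda>t. f (z + of_real t * v)) 0) (at 0)"
    using assms DERIV_deriv_iff_real_differentiable by blast
  moreover then have "pdir v f z = deriv (\<lambda>t. f (z + of_real t * v)) 0" by (rule pdir_eq)
  ultimately show ?thesis by simp
qed

lemma ev_line:
  fixes z v :: complex
  assumes "open T" "z \<in> T"
  shows "\<forall>\<^sub>F t in nhds (0::real). z + of_real t * v \<in> T"
proof -
  obtain e where e: "e > 0" "ball z e \<subseteq> T" using assms open_contains_ball by blast
  show ?thesis unfolding eventually_nhds_metric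
  proof (intro exI[of _ "e / (cmod v + 1)"] conjI allI impI)
    show "e / (cmod v + 1) > 0" using e norm_ge_zero[of v] by (intro divide_pos_pos) linarith+
    fix t :: real assume "dist t 0 < e / (cmod v + 1)"
    moreover have pos: "cmod v + 1 > 0" using norm_ge_zero[of v] by linarith
    ultimately have "\<bar>t\<bar> * (cmod v + 1) < e"
      by (simp add: pos_less_divide_eq[OF pos])
    moreover have "cmod (of_real t * v) \<le> \<bar>t\<bar> * (cmod v + 1)"
      by (simp add: norm_mult mult_left_mono)
    ultimately have "cmod (of_real t * v) < e" by linarith
    thus "z + of_real t * v \<in> T" using e(2) by (auto simp: dist_norm)
  qed
qed

lemma smooth_diff:
  assumes "smooth_on T f" "set vs \<subseteq> {1, \<i>}" "v \<in> {1, \<i>}" "z \<in> T"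
  shows "((\<lambda>t. iter_pd vs f (z + of_real t * v)) has_real_derivative pdir v (iter_pd vs f) z) (at 0)"
  using assms unfolding smooth_on_def by (intro pdir_has) blast

lemma iter_avg:
  assumes "open T" "smooth_on T f" "smooth_on T g" "set vs \<subseteq> {1, \<i>}"
  shows "\<forall>z\<in>T. iter_pd vs (\<lambda>z. (f z + g z) / 2) z = (iter_pd vs f z + iter_pd vs g z) / 2"
  using assms(4)
proof (induction vs)
  case Nil
  show ?case by simp
next
  case (Cons v vs)
  hence IH: "\<forall>z\<in>T. iter_pd vs (\<lambda>z. (f z + g z) / 2) z = (iter_pd vs f z + iter_pd vs g z) / 2"
    and v: "v \<in> {1, \<i>}" and vs: "set vs \<subseteq> {1, \<i>}" by auto
  show ?case
  proof
    fix z assume z: "z \<in> T"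
    have df: "((\<lambda>t. iter_pd vs f (z + of_real t * v)) has_real_derivative pdir v (iter_pd vs f) z) (at 0)"
      using smooth_diff[OF assms(2) vs v z] .
    have dg: "((\<lambda>t. iter_pd vs g (z + of_real t * v)) has_real_derivative pdir v (iter_pd vs g) z) (at 0)"
      using smooth_diff[OF assms(3) vs v z] .
    have d: "((\<lambda>t. (iter_pd vs f (z + of_real t * v) + iter_pd vs g (z + of_real t * v)) / 2)
       has_real_derivative (pdir v (iter_pd vs f) z + pdir v (iter_pd vs g) z) / 2) (at 0)"
      using df dg by (auto intro!: derivative_eq_intros)
    have ev: "\<forall>\<^sub>F t in nhds 0. (iter_pd vs f (z + of_real t * v) + iter_pd vs g (z + of_real t * v)) / 2
       = iter_pd vs (\<lambda>z. (f z + g z) / 2) (z + of_real t * v)"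
      using ev_line[OF assms(1) z, of v] IH by (auto elim: eventually_mono)
    have "((\<lambda>t. iter_pd vs (\<lambda>z. (f z + g z) / 2) (z + of_real t * v))
       has_real_derivative (pdir v (iter_pd vs f) z + pdir v (iter_pd vs g) z) / 2) (at 0)"
      using DERIV_cong_ev[OF refl ev refl] d by simp
    then show "iter_pd (v # vs) (\<lambda>z. (f z + g z) / 2) z = (iter_pd (v # vs) f z + iter_pd (v # vs) g z) / 2"
      by (simp add: pdir_eq)
  qed
qed

lemma smooth_avg:
  assumes "open T" "smooth_on T f" "smooth_on T g"
  shows "smooth_on T (\<lambda>z. (f z + g z) / 2)"
  unfolding smooth_on_def
proof (intro allI impI conjI ballI)
  fix vs :: "complex list" assume vs: "set vs \<subseteq> {1, \<i>}"
  note IA = iter_avg[OF assms vs]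
  have "continuous_on T (\<lambda>z. (iter_pd vs f z + iter_pd vs g z) / 2)"
    using assms(2,3) vs unfolding smooth_on_def by (auto intro!: continuous_intros)
  then show "continuous_on T (iter_pd vs (\<lambda>z. (f z + g z) / 2))"
    by (rule continuous_on_eq) (use IA in simp)
  fix v z assume v: "v \<in> {1, \<i>}" and z: "z \<in> T"
  have df: "((\<lambda>t. iter_pd vs f (z + of_real t * v)) has_real_derivative pdir v (iter_pd vs f) z) (at 0)"
    using smooth_diff[OF assms(2) vs v z] .
  have dg: "((\<lambda>t. iter_pd vs g (z + of_real t * v)) has_real_derivative pdir v (iter_pd vs g) z) (at 0)"
    using smooth_diff[OF assms(3) vs v z] .
  have d: "((\<lambda>t. (iter_pd vs f (z + of_real t * v) + iter_pd vs g (z + of_real t * v)) / 2)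
     has_real_derivative (pdir v (iter_pd vs f) z + pdir v (iter_pd vs g) z) / 2) (at 0)"
    using df dg by (auto intro!: derivative_eq_intros)
  have ev: "\<forall>\<^sub>F t in nhds 0. (iter_pd vs f (z + of_real t * v) + iter_pd vs g (z + of_real t * v)) / 2
     = iter_pd vs (\<lambda>z. (f z + g z) / 2) (z + of_real t * v)"
    using ev_line[OF assms(1) z, of v] IA by (auto elim: eventually_mono)
  have "((\<lambda>t. iter_pd vs (\<lambda>z. (f z + g z) / 2) (z + of_real t * v))
     has_real_derivative (pdir v (iter_pd vs f) z + pdir v (iter_pd vs g) z) / 2) (at 0)"
    using DERIV_cong_ev[OF refl ev refl] d by simp
  then show "(\<lambda>t. iter_pd vs (\<lambda>z. (f z + g z) / 2) (z + of_real t * v)) differentiable at 0"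
    using real_differentiable_def by blast
qed

lemma smooth_mono: "smooth_on A f \<Longrightarrow> B \<subseteq> A \<Longrightarrow> smooth_on B f"
  unfolding smooth_on_def by (meson continuous_on_subset subsetD)

lemma lap_ln:
  assumes "open T" "smooth_on T f" "\<forall>w\<in>T. f w > 0" "z \<in> T" "v \<in> {1, \<i>}"
  shows "pdir v (pdir v (\<lambda>w. ln (f w))) z = (pdir v (pdir v f) z * f z - (pdir v f z)^2) / (f z)^2"
proof -
  have d1: "((\<lambda>t. f (w + of_real t * v)) has_real_derivative pdir v f w) (at 0)" if "w \<in> T" for w
    using smooth_diff[OF assms(2), where vs="[]" and v=v and z=w] assms(5) that by simp
  have l1: "pdir v (\<lambda>w. ln (f w)) w = pdir v f w / f w" if w: "w \<in> T" for w
  proof (rule pdir_eq)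
    have "((\<lambda>t. ln (f (w + of_real t * v))) has_real_derivative inverse (f w) * pdir v f w) (at 0)"
    proof -
      have "(ln has_real_derivative inverse (f w)) (at (f (w + of_real 0 * v)))"
        using DERIV_ln assms(3) w by simp
      from DERIV_chain2[OF this d1[OF w]] show ?thesis by simp
    qed
    then show "((\<lambda>t. ln (f (w + of_real t * v))) has_real_derivative pdir v f w / f w) (at 0)"
      by (simp add: field_simps)
  qed
  have d2: "((\<lambda>t. pdir v f (z + of_real t * v)) has_real_derivative pdir v (pdir v f) z) (at 0)"
    using smooth_diff[OF assms(2), where vs="[v]" and v=v and z=z] assms(4,5) by simp
  have ev: "\<forall>\<^sub>F t in nhds 0. pdir v f (z + of_real t * v) / f (z + of_real t * v)
     = pdir v (\<lambda>w. ln (f w)) (z + of_real t * v)"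
    using ev_line[OF assms(1,4), of v] l1 by (auto elim: eventually_mono)
  have "((\<lambda>t. pdir v f (z + of_real t * v) / f (z + of_real t * v)) has_real_derivative
     (pdir v (pdir v f) z * f z - pdir v f z * pdir v f z) / (f z * f z)) (at 0)"
    using DERIV_divide[OF d2 d1[OF assms(4)]] assms(3,4) by force
  then have "((\<lambda>t. pdir v (\<lambda>w. ln (f w)) (z + of_real t * v)) has_real_derivative
     (pdir v (pdir v f) z * f z - pdir v f z * pdir v f z) / (f z * f z)) (at 0)"
    using DERIV_cong_ev[OF refl ev refl] by simp
  then show ?thesis by (simp add: pdir_eq power2_eq_square)
qed

lemma key_ineq:
  fixes g1 g2 A1 A2 B1 B2 a1 a2 b1 b2 :: real
  assumes "g1 > 0" "g2 > 0" "A1 * g1 - a1^2 + (B1 * g1 - b1^2) \<ge> 0"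
    "A2 * g2 - a2^2 + (B2 * g2 - b2^2) \<ge> 0"
  shows "(A1 + A2) * (g1 + g2) - (a1 + a2)^2 + ((B1 + B2) * (g1 + g2) - (b1 + b2)^2) \<ge> 0"
proof -
  define P1 where "P1 = (A1 + B1) * g1"
  define P2 where "P2 = (A2 + B2) * g2"
  define q1 where "q1 = a1^2 + b1^2"
  define q2 where "q2 = a2^2 + b2^2"
  have p1: "P1 \<ge> q1" using assms(3) unfolding P1_def q1_def by (simp add: algebra_simps)
  have p2: "P2 \<ge> q2" using assms(4) unfolding P2_def q2_def by (simp add: algebra_simps)
  have eq: "g1 * g2 * ((A1 + A2) * (g1 + g2) - (a1 + a2)^2 + ((B1 + B2) * (g1 + g2) - (b1 + b2)^2))
    = g1 * g2 * (P1 + P2) + g2^2 * P1 + g1^2 * P2 - g1 * g2 * (q1 + q2 + 2 * (a1 * a2 + b1 * b2))"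
    unfolding P1_def P2_def q1_def q2_def by (simp add: algebra_simps power2_eq_square)
  have i1: "g1 * g2 * (P1 + P2) \<ge> g1 * g2 * (q1 + q2)"
    using p1 p2 assms(1,2) by (intro mult_left_mono) auto
  have i2: "g2^2 * P1 \<ge> g2^2 * q1" using p1 by (intro mult_left_mono) auto
  have i3: "g1^2 * P2 \<ge> g1^2 * q2" using p2 by (intro mult_left_mono) auto
  have i4: "g2^2 * q1 + g1^2 * q2 - g1 * g2 * (2 * (a1 * a2 + b1 * b2))
      = (g2 * a1 - g1 * a2)^2 + (g2 * b1 - g1 * b2)^2"
    unfolding q1_def q2_def by (simp add: algebra_simps power2_eq_square)
  have i5: "(g2 * a1 - g1 * a2)^2 + (g2 * b1 - g1 * b2)^2 \<ge> 0" by simp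
  have i6: "g1 * g2 * (q1 + q2 + 2 * (a1 * a2 + b1 * b2)) = g1 * g2 * (q1 + q2) + g1 * g2 * (2 * (a1 * a2 + b1 * b2))"
    by (simp add: algebra_simps)
  have "g1 * g2 * ((A1 + A2) * (g1 + g2) - (a1 + a2)^2 + ((B1 + B2) * (g1 + g2) - (b1 + b2)^2)) \<ge> 0"
    unfolding eq i6 using i1 i2 i3 i4 i5 by linarith
  moreover have "g1 * g2 > 0" using assms by simp
  ultimately show ?thesis by (simp add: zero_le_mult_iff)
qed

lemma dfac:
  fixes p :: complex and b bi :: real
  assumes "b \<le> bi"
  defines "d \<equiv> (\<lambda>z. if bi = b then 1 else cmod (z - p) powr (2 * (bi - b)))"
  shows "continuous_on A d" "\<And>z. d z \<ge> 0"
    "\<And>z. z \<noteq> p \<Longrightarrow> d z * cmod (z - p) powr (2 * b) = cmod (z - p) powr (2 * bi)"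
proof -
  show "continuous_on A d"
  proof (cases "bi = b")
    case True
    then show ?thesis unfolding d_def by simp
  next
    case False
    then have "bi - b > 0" using assms(1) by simp
    then have "continuous_on A (\<lambda>z. cmod (z - p) powr (2 * (bi - b)))"
      by (intro continuous_on_powr') (auto intro!: continuous_intros)
    then show ?thesis unfolding d_def using False by simp
  qed
  show "\<And>z. d z \<ge> 0" unfolding d_def by simp
  fix z assume "z \<noteq> p"
  show "d z * cmod (z - p) powr (2 * b) = cmod (z - p) powr (2 * bi)"
  proof (cases "bi = b")
    case True
    then show ?thesis unfolding d_def by simp
  next
    case False
    then have "d z * cmod (z - p) powr (2 * b) = cmod (z - p) powr (2 * (bi - b) + 2 * b)"
      unfolding d_def by (simp add: powr_add[symmetric])
    also have "2 * (bi - b) + 2 * b = 2 * bi" by simp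
    finally show ?thesis .
  qed
qed

lemma combine:
  fixes p :: complex
  assumes "\<beta>1 \<ge> 0" "\<beta>2 \<ge> 0" "continuous_on (ball p r) h1" "continuous_on (ball p r) h2"
    "\<forall>z\<in>ball p r - {p}. g1 z = exp (h1 z) * cmod (z - p) powr (2 * \<beta>1)"
    "\<forall>z\<in>ball p r - {p}. g2 z = exp (h2 z) * cmod (z - p) powr (2 * \<beta>2)"
  shows "\<exists>\<beta>::real. \<beta> \<ge> 0 \<and> (\<exists>h::complex \<Rightarrow> real. continuous_on (ball p r) h \<and>
     (\<forall>z\<in>ball p r - {p}. (g1 z + g2 z) / 2 = exp (h z) * cmod (z - p) powr (2 * \<beta>)))"
proof -
  define b where "b = min \<beta>1 \<beta>2"
  define d1 where "d1 = (\<lambda>z. if \<beta>1 = b then 1 else cmod (z - p) powr (2 * (\<beta>1 - b)))"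
  define d2 where "d2 = (\<lambda>z. if \<beta>2 = b then 1 else cmod (z - p) powr (2 * (\<beta>2 - b)))"
  have b1: "b \<le> \<beta>1" and b2: "b \<le> \<beta>2" unfolding b_def by auto
  have D1c: "continuous_on (ball p r) d1" unfolding d1_def by (rule dfac(1)[OF b1])
  have D2c: "continuous_on (ball p r) d2" unfolding d2_def by (rule dfac(1)[OF b2])
  have D1n: "d1 z \<ge> 0" for z unfolding d1_def by (rule dfac(2)[OF b1])
  have D2n: "d2 z \<ge> 0" for z unfolding d2_def by (rule dfac(2)[OF b2])
  have D1e: "d1 z * cmod (z - p) powr (2 * b) = cmod (z - p) powr (2 * \<beta>1)" if "z \<noteq> p" for z
    unfolding d1_def by (rule dfac(3)[OF b1 that])
  have D2e: "d2 z * cmod (z - p) powr (2 * b) = cmod (z - p) powr (2 * \<beta>2)" if "z \<noteq> p" for z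
    unfolding d2_def by (rule dfac(3)[OF b2 that])
  have one: "d1 z = 1 \<or> d2 z = 1" for z unfolding d1_def d2_def b_def by auto
  have pos: "(exp (h1 z) * d1 z + exp (h2 z) * d2 z) / 2 > 0" for z
  proof -
    have "exp (h1 z) * d1 z \<ge> 0" "exp (h2 z) * d2 z \<ge> 0" using D1n D2n by auto
    moreover have "exp (h1 z) * d1 z > 0 \<or> exp (h2 z) * d2 z > 0" using one[of z] by auto
    ultimately show ?thesis by (elim disjE) (simp_all add: add_pos_nonneg add_nonneg_pos)
  qed
  define h where "h = (\<lambda>z. ln ((exp (h1 z) * d1 z + exp (h2 z) * d2 z) / 2))"
  have "continuous_on (ball p r) h"
    unfolding h_def using pos D1c D2c assms(3,4)
    by (intro continuous_on_ln) (auto intro!: continuous_intros simp: less_imp_neq[symmetric])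
  moreover have "\<forall>z\<in>ball p r - {p}. (g1 z + g2 z) / 2 = exp (h z) * cmod (z - p) powr (2 * b)"
  proof
    fix z assume z: "z \<in> ball p r - {p}"
    then have zp: "z \<noteq> p" by auto
    have "exp (h z) * cmod (z - p) powr (2 * b)
        = (exp (h1 z) * (d1 z * cmod (z - p) powr (2 * b)) + exp (h2 z) * (d2 z * cmod (z - p) powr (2 * b))) / 2"
      unfolding h_def using pos[of z] by (simp add: algebra_simps)
    also have "\<dots> = (g1 z + g2 z) / 2" using D1e[OF zp] D2e[OF zp] assms(5,6) z by simp
    finally show "(g1 z + g2 z) / 2 = exp (h z) * cmod (z - p) powr (2 * b)" by simp
  qed
  moreover have "b \<ge> 0" unfolding b_def using assms by simp
  ultimately show ?thesis by blast
qed

lemma rep_local: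
  fixes p :: complex
  assumes "open U" "cat0_conformal_metric U g" "p \<in> U"
  shows "\<exists>\<beta>::real. \<beta> \<ge> 0 \<and> (\<exists>r>0. \<exists>h::complex \<Rightarrow> real.
            ball p r \<subseteq> U \<and> continuous_on (ball p r) h \<and>
            (\<forall>z\<in>ball p r - {p}. g z = exp (h z) * cmod (z - p) powr (2 * \<beta>)))"
proof -
  obtain S where S: "finite S" "S \<subseteq> U" "\<forall>z\<in>U - S. g z > 0" "smooth_on (U - S) g"
    "\<forall>p\<in>S. \<exists>\<beta>::real. \<beta> \<ge> 0 \<and> (\<exists>r>0. \<exists>h::complex \<Rightarrow> real.
            ball p r \<subseteq> U \<and> continuous_on (ball p r) h \<and>
            (\<forall>z\<in>ball p r - {p}. g z = exp (h z) * cmod (z - p) powr (2 * \<beta>)))"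
    using assms(2) unfolding cat0_conformal_metric_def by blast
  show ?thesis
  proof (cases "p \<in> S")
    case True
    then show ?thesis using S(5) by blast
  next
    case False
    have "open (U - S)" using assms(1) S(1) by (simp add: finite_imp_closed open_Diff)
    then obtain r where r: "r > 0" "ball p r \<subseteq> U - S" using False assms(3) open_contains_ball by blast
    have cg: "continuous_on (U - S) g" using S(4) unfolding smooth_on_def
      by (metis empty_subsetI iter_pd.simps(1) list.set(1))
    have gp: "\<forall>z\<in>ball p r. g z > 0" using r(2) S(3) by blast
    have "continuous_on (ball p r) (\<lambda>z. ln (g z))"
      using gp continuous_on_subset[OF cg r(2)]
      by (intro continuous_on_ln) auto
    moreover have "\<forall>z\<in>ball p r - {p}. g z = exp (ln (g z)) * cmod (z - p) powr (2 * 0)"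
      using gp by auto
    ultimately show ?thesis using r by (intro exI[of _ 0]) blast
  qed
qed

lemma lap_nonneg_iff:
  assumes "open T" "smooth_on T f" "\<forall>w\<in>T. f w > 0" "z \<in> T"
  shows "laplacian (\<lambda>w. ln (f w)) z =
    ((pdir 1 (pdir 1 f) z * f z - (pdir 1 f z)^2) + (pdir \<i> (pdir \<i> f) z * f z - (pdir \<i> f z)^2)) / (f z)^2"
  unfolding laplacian_def using lap_ln[OF assms, of 1] lap_ln[OF assms, of \<i>]
  by (simp add: add_divide_distrib)

lemma curv_iff:
  assumes "open T" "smooth_on T f" "\<forall>w\<in>T. f w > 0" "z \<in> T"
  shows "gauss_curv f z \<le> 0 \<longleftrightarrow>
    (pdir 1 (pdir 1 f) z * f z - (pdir 1 f z)^2) + (pdir \<i> (pdir \<i> f) z * f z - (pdir \<i> f z)^2) \<ge> 0"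
proof -
  have fz: "f z > 0" using assms by auto
  define X where "X = (pdir 1 (pdir 1 f) z * f z - (pdir 1 f z)^2) + (pdir \<i> (pdir \<i> f) z * f z - (pdir \<i> f z)^2)"
  have "gauss_curv f z = - (X / (f z)^2) / (2 * f z)"
    unfolding gauss_curv_def lap_nonneg_iff[OF assms] X_def by simp
  moreover have "- (X / (f z)^2) / (2 * f z) \<le> 0 \<longleftrightarrow> X \<ge> 0"
    using fz by (simp add: zero_le_divide_iff) (meson mult_pos_pos not_le zero_less_power)
  ultimately show ?thesis unfolding X_def by simp
qed

theorem lemma4p2:
  fixes U :: "complex set" and g1 g2 :: "complex \<Rightarrow> real"
  assumes "open U"
    and "cat0_conformal_metric U g1"
    and "cat0_conformal_metric U g2"
  shows "cat0_conformal_metric U (\<lambda>z. (g1 z + g2 z) / 2)"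
proof -
  obtain S1 where S1: "finite S1" "S1 \<subseteq> U" "\<forall>z\<in>U - S1. g1 z > 0" "smooth_on (U - S1) g1"
    "\<forall>z\<in>U - S1. gauss_curv g1 z \<le> 0"
    using assms(2) unfolding cat0_conformal_metric_def by blast
  obtain S2 where S2: "finite S2" "S2 \<subseteq> U" "\<forall>z\<in>U - S2. g2 z > 0" "smooth_on (U - S2) g2"
    "\<forall>z\<in>U - S2. gauss_curv g2 z \<le> 0"
    using assms(3) unfolding cat0_conformal_metric_def by blast
  define S where "S = S1 \<union> S2"
  define T where "T = U - S"
  define F where "F = (\<lambda>z. (g1 z + g2 z) / 2)"
  have oT: "open T" unfolding T_def S_def using assms(1) S1(1) S2(1)
    by (simp add: finite_imp_closed open_Diff)
  have sm1: "smooth_on T g1" using S1(4) by (rule smooth_mono) (auto simp: T_def S_def)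
  have sm2: "smooth_on T g2" using S2(4) by (rule smooth_mono) (auto simp: T_def S_def)
  have p1: "\<forall>w\<in>T. g1 w > 0" using S1(3) by (auto simp: T_def S_def)
  have p2: "\<forall>w\<in>T. g2 w > 0" using S2(3) by (auto simp: T_def S_def)
  have pF: "\<forall>w\<in>T. F w > 0" using p1 p2 by (auto simp: F_def intro!: add_pos_pos)
  have smF: "smooth_on T F" unfolding F_def by (rule smooth_avg[OF oT sm1 sm2])
  have curv: "gauss_curv F z \<le> 0" if z: "z \<in> T" for z
  proof -
    have c1: "gauss_curv g1 z \<le> 0" using S1(5) z by (auto simp: T_def S_def)
    have c2: "gauss_curv g2 z \<le> 0" using S2(5) z by (auto simp: T_def S_def)
    have D1: "pdir v F z = (pdir v g1 z + pdir v g2 z) / 2" if "v \<in> {1, \<i>}" for v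
      using iter_avg[OF oT sm1 sm2, of "[v]"] that z by (simp add: F_def)
    have D2: "pdir v (pdir v F) z = (pdir v (pdir v g1) z + pdir v (pdir v g2) z) / 2" if "v \<in> {1, \<i>}" for v
      using iter_avg[OF oT sm1 sm2, of "[v, v]"] that z by (simp add: F_def)
    have K: "0 \<le> (pdir 1 (pdir 1 g1) z + pdir 1 (pdir 1 g2) z) * (g1 z + g2 z) - (pdir 1 g1 z + pdir 1 g2 z)^2 +
       ((pdir \<i> (pdir \<i> g1) z + pdir \<i> (pdir \<i> g2) z) * (g1 z + g2 z) - (pdir \<i> g1 z + pdir \<i> g2 z)^2)"
    proof (rule key_ineq)
      show "g1 z > 0" "g2 z > 0" using p1 p2 z by auto
      show "0 \<le> pdir 1 (pdir 1 g1) z * g1 z - (pdir 1 g1 z)\<^sup>2 + (pdir \<i> (pdir \<i> g1) z * g1 z - (pdir \<i> g1 z)\<^sup>2)"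
        using c1 curv_iff[OF oT sm1 p1 z] by simp
      show "0 \<le> pdir 1 (pdir 1 g2) z * g2 z - (pdir 1 g2 z)\<^sup>2 + (pdir \<i> (pdir \<i> g2) z * g2 z - (pdir \<i> g2 z)\<^sup>2)"
        using c2 curv_iff[OF oT sm2 p2 z] by simp
    qed
    have E: "(pdir 1 (pdir 1 F) z * F z - (pdir 1 F z)^2) + (pdir \<i> (pdir \<i> F) z * F z - (pdir \<i> F z)^2)
      = ((pdir 1 (pdir 1 g1) z + pdir 1 (pdir 1 g2) z) * (g1 z + g2 z) - (pdir 1 g1 z + pdir 1 g2 z)^2 +
       ((pdir \<i> (pdir \<i> g1) z + pdir \<i> (pdir \<i> g2) z) * (g1 z + g2 z) - (pdir \<i> g1 z + pdir \<i> g2 z)^2)) / 4"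
    proof -
      have Fz: "F z = (g1 z + g2 z) / 2" by (simp add: F_def)
      have a: "pdir 1 F z = (pdir 1 g1 z + pdir 1 g2 z) / 2" by (rule D1) simp
      have b: "pdir \<i> F z = (pdir \<i> g1 z + pdir \<i> g2 z) / 2" by (rule D1) simp
      have c: "pdir 1 (pdir 1 F) z = (pdir 1 (pdir 1 g1) z + pdir 1 (pdir 1 g2) z) / 2" by (rule D2) simp
      have d: "pdir \<i> (pdir \<i> F) z = (pdir \<i> (pdir \<i> g1) z + pdir \<i> (pdir \<i> g2) z) / 2" by (rule D2) simp
      show ?thesis unfolding Fz a b c d by (simp add: power2_eq_square field_simps)
    qed
    show ?thesis unfolding curv_iff[OF oT smF pF z] E using K by simp
  qed
  show ?thesis
    unfolding cat0_conformal_metric_def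
  proof (intro exI[of _ S] conjI)
    show "finite S" using S1(1) S2(1) by (simp add: S_def)
    show "S \<subseteq> U" using S1(2) S2(2) by (simp add: S_def)
    show "\<forall>z\<in>U - S. 0 < (g1 z + g2 z) / 2" using pF by (simp add: F_def T_def)
    show "smooth_on (U - S) (\<lambda>z. (g1 z + g2 z) / 2)" using smF by (simp add: F_def T_def)
    show "\<forall>z\<in>U - S. gauss_curv (\<lambda>z. (g1 z + g2 z) / 2) z \<le> 0" using curv by (simp add: F_def T_def)
    show "\<forall>p\<in>S. \<exists>\<beta>\<ge>0. \<exists>r>0. \<exists>h. ball p r \<subseteq> U \<and> continuous_on (ball p r) h \<and>
        (\<forall>z\<in>ball p r - {p}. (g1 z + g2 z) / 2 = exp (h z) * cmod (z - p) powr (2 * \<beta>))"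
    proof
      fix p assume "p \<in> S"
      then have pU: "p \<in> U" using S1(2) S2(2) by (auto simp: S_def)
      obtain \<beta>1 r1 h1 where R1: "\<beta>1 \<ge> 0" "r1 > 0" "ball p r1 \<subseteq> U" "continuous_on (ball p r1) h1"
        "\<forall>z\<in>ball p r1 - {p}. g1 z = exp (h1 z) * cmod (z - p) powr (2 * \<beta>1)"
        using rep_local[OF assms(1,2) pU] by blast
      obtain \<beta>2 r2 h2 where R2: "\<beta>2 \<ge> 0" "r2 > 0" "ball p r2 \<subseteq> U" "continuous_on (ball p r2) h2"
        "\<forall>z\<in>ball p r2 - {p}. g2 z = exp (h2 z) * cmod (z - p) powr (2 * \<beta>2)"
        using rep_local[OF assms(1,3) pU] by blast
      define r where "r = min r1 r2"
      have rs1: "ball p r \<subseteq> ball p r1" and rs2: "ball p r \<subseteq> ball p r2" by (auto simp: r_def)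
      have e1: "\<forall>z\<in>ball p r - {p}. g1 z = exp (h1 z) * cmod (z - p) powr (2 * \<beta>1)"
        using R1(5) rs1 by blast
      have e2: "\<forall>z\<in>ball p r - {p}. g2 z = exp (h2 z) * cmod (z - p) powr (2 * \<beta>2)"
        using R2(5) rs2 by blast
      obtain \<beta> h where bh: "\<beta> \<ge> 0" "continuous_on (ball p r) h"
         "\<forall>z\<in>ball p r - {p}. (g1 z + g2 z) / 2 = exp (h z) * cmod (z - p) powr (2 * \<beta>)"
        using combine[OF R1(1) R2(1) continuous_on_subset[OF R1(4) rs1] continuous_on_subset[OF R2(4) rs2] e1 e2]
        by blast
      have rp: "r > 0" using R1(2) R2(2) by (simp add: r_def)
      have rU: "ball p r \<subseteq> U" using R1(3) rs1 by blast
      show "\<exists>\<beta>\<ge>0. \<exists>r>0. \<exists>h. ball p r \<subseteq> U \<and> continuous_on (ball p r) h \<and>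
        (\<forall>z\<in>ball p r - {p}. (g1 z + g2 z) / 2 = exp (h z) * cmod (z - p) powr (2 * \<beta>))"
        apply (rule exI[of _ \<beta>], rule conjI, rule bh(1))
        apply (rule exI[of _ r], rule conjI, rule rp)
        apply (rule exI[of _ h])
        using rU bh(2,3) by blast
    qed
  qed
qed

end
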